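(* Fix $b\in(0,1)$ and $N>0$, and let $z_1,\dots,z_N$ be (small) complex numbers with $|bz_i|<1$ for all $i$ and $1-(1+b)z_i+bz_iz_j\neq0$ for all $i\neq j$. For $\sigma\in\mathfrak{S}(N)$ define \[A_\sigma=(-1)^\sigma\prod_{i<j}\frac{1-(1+b)z_{\sigma(i)}+bz_{\sigma(i)}z_{\sigma(j)}}{1-(1+b)z_i+bz_iz_j},\qquad \Phi(x_1,\dots,x_N;z_1,\dots,z_N)=\sum_{\sigma\in\mathfrak{S}(N)}A_\sigma\prod_{i=1}^Nz_{\sigma(i)}^{x_i}.\] Then for every $t\ge0$ and $\vec x\in X^N$, \[\sum_{\vec y\in X^N}\mathcal{T}^{(N)}_t(\vec x\to\vec y)\Phi(\vec y;z_1,\dots,z_N)=\exp\left(-t\sum_{i=1}^N\frac{1-z_i}{1-bz_i}\right)\Phi(\vec x;z_1,\dots,z_N).\]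
   Context: $X^N=\{\vec x=(x_1<x_2<\dots<x_N): x_i\in\mathbb{Z}_{\geq0}\}$ is the state space of $N$-particle HL-PushTASEP on $\mathbb{Z}_{\geq0}$ with parameter $b$, and $\mathcal{T}^{(N)}_t(\vec x\to\vec y)$ is its transition probability from $\vec x$ to $\vec y$ in time $t$. Dynamics: each particle has an independent rate-$1$ exponential clock; when the clock of the particle at $x_m$ rings, it jumps $j$ steps to the right with probability $(1-b)b^{j-1}$ for $1\leq j<x_{m+1}-x_m$, and with probability $b^{x_{m+1}-x_m-1}$ it reaches $x_{m+1}$, occupies it, and the particle previously at $x_{m+1}$ is instantaneously activated and moves by the same rule (the rightmost particle has no right neighbour, $x_{N+1}=+\infty$). $(-1)^\sigma$ is the sign of $\sigma$. *)

theory Defs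
  imports "HOL-Analysis.Analysis" "HOL-Combinatorics.Permutations"
begin

text \<open>States of N-particle HL-PushTASEP: strictly increasing lists of length N
  (particles indexed 0..N-1 instead of 1..N).\<close>
definition XN :: "nat \<Rightarrow> nat list set" where
  "XN N = {xs. length xs = N \<and> sorted_wrt (<) xs}"

text \<open>Probability that, when the clock of particle m rings in state xs,
  the resulting state is ys (including the cascade of pushes).\<close>
function push_move :: "real \<Rightarrow> nat \<Rightarrow> nat list \<Rightarrow> nat list \<Rightarrow> real" where
  "push_move b m xs ys =
    (if length ys \<noteq> length xs \<or> m \<ge> length xs then 0
     else if Suc m = length xs then
       (if xs ! m < ys ! m \<and> ys = xs[m := ys ! m]
        then (1 - b) * b ^ (ys ! m - xs ! m - 1) else 0)
     else
       (if xs ! m < ys ! m \<and> ys ! m < xs ! Suc m \<and> ys = xs[m := ys ! m]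
        then (1 - b) * b ^ (ys ! m - xs ! m - 1)
        else if ys ! m = xs ! Suc m
        then b ^ (xs ! Suc m - xs ! m - 1) * push_move b (Suc m) (xs[m := xs ! Suc m]) ys
        else 0))"
  by pat_completeness auto
termination
  by (relation "Wellfounded.measure (\<lambda>(b, m, xs, ys). length xs - m)") auto

text \<open>Jump chain: each of the N rate-1 clocks rings with probability 1/N.
  Since every ring moves the configuration, the number of moves up to time t
  is Poisson(N t).\<close>
definition jump_kernel :: "real \<Rightarrow> nat \<Rightarrow> nat list \<Rightarrow> nat list \<Rightarrow> real" where
  "jump_kernel b N xs ys = (\<Sum>m<N. push_move b m xs ys) / real N"

fun jump_kernel_pow :: "real \<Rightarrow> nat \<Rightarrow> nat \<Rightarrow> nat list \<Rightarrow> nat list \<Rightarrow> real" where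
  "jump_kernel_pow b N 0 xs ys = (if xs = ys then 1 else 0)"
| "jump_kernel_pow b N (Suc n) xs ys =
     (\<Sum>\<^sub>\<infinity>ws\<in>XN N. jump_kernel_pow b N n xs ws * jump_kernel b N ws ys)"

definition trans_prob :: "real \<Rightarrow> nat \<Rightarrow> real \<Rightarrow> nat list \<Rightarrow> nat list \<Rightarrow> real" where
  "trans_prob b N t xs ys =
     (\<Sum>\<^sub>\<infinity>n\<in>UNIV. exp (- real N * t) * (real N * t) ^ n / fact n * jump_kernel_pow b N n xs ys)"

definition Afac :: "real \<Rightarrow> complex \<Rightarrow> complex \<Rightarrow> complex" where
  "Afac b u v = 1 - (1 + complex_of_real b) * u + complex_of_real b * u * v"

definition A_coef :: "real \<Rightarrow> nat \<Rightarrow> (nat \<Rightarrow> complex) \<Rightarrow> (nat \<Rightarrow> nat) \<Rightarrow> complex" where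
  "A_coef b N z \<sigma> = of_int (sign \<sigma>) *
     (\<Prod>(i, j)\<in>{(i, j). i < j \<and> j < N}.
        Afac b (z (\<sigma> i)) (z (\<sigma> j)) / Afac b (z i) (z j))"

definition Phi :: "real \<Rightarrow> nat \<Rightarrow> nat list \<Rightarrow> (nat \<Rightarrow> complex) \<Rightarrow> complex" where
  "Phi b N xs z = (\<Sum>\<sigma>\<in>{\<sigma>. \<sigma> permutes {..<N}}.
     A_coef b N z \<sigma> * (\<Prod>i<N. z (\<sigma> i) ^ (xs ! i)))"

end

theory Submission imports Defs begin
declare push_move.simps[simp del]

lemma push_move_support:
  "push_move b m xs ys \<noteq> 0 \<Longrightarrow> length ys = length xs \<and> m < length xs \<and> (\<forall>i<m. ys ! i = xs ! i)"
proof (induction b m xs ys rule: push_move.induct)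
  case (1 b m xs ys)
  show ?case
  proof (cases "length ys \<noteq> length xs \<or> m \<ge> length xs")
    case True then show ?thesis using "1.prems" by (subst (asm) push_move.simps) auto
  next
    case False
    then show ?thesis
    proof (cases "Suc m = length xs")
      case True
      then have "ys = xs[m := ys ! m]" using "1.prems" False by (subst (asm) push_move.simps) (auto split: if_splits)
      then show ?thesis using False by (metis nth_list_update_neq nat_neq_iff not_le)
    next
      case F2: False
      show ?thesis
      proof (cases "xs ! m < ys ! m \<and> ys ! m < xs ! Suc m \<and> ys = xs[m := ys ! m]")
        case True then show ?thesis using False by (metis nth_list_update_neq nat_neq_iff not_le)
      next
        case F3: False
        then have eq: "ys ! m = xs ! Suc m" and nz: "push_move b (Suc m) (xs[m := xs ! Suc m]) ys \<noteq> 0"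
          using "1.prems" False F2 by (subst (asm) push_move.simps; auto split: if_splits)+
        have "length ys = length xs \<and> Suc m < length xs \<and> (\<forall>i<Suc m. ys ! i = xs[m := xs ! Suc m] ! i)"
          using "1.IH"[OF _ F2 F3 eq] False nz by auto
        then show ?thesis using False by auto
      qed
    qed
  qed
qed

lemma push_move_nonneg:
  "0 \<le> b \<Longrightarrow> b \<le> 1 \<Longrightarrow> push_move b m xs ys \<ge> 0"
proof (induction b m xs ys rule: push_move.induct)
  case (1 b m xs ys)
  show ?case
    apply (subst push_move.simps)
    apply (simp only: split: if_split)
    using 1 by (intro conjI impI; simp)+
qed



lemma pm_bad: "length ys \<noteq> length xs \<or> m \<ge> length xs \<Longrightarrow> push_move b m xs ys = 0"
  by (subst push_move.simps) simp

lemma pm_last: "length ys = length xs \<Longrightarrow> Suc m = length xs \<Longrightarrow> push_move b m xs ys =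
  (if xs ! m < ys ! m \<and> ys = xs[m := ys ! m] then (1 - b) * b ^ (ys ! m - xs ! m - 1) else 0)"
  by (subst push_move.simps) simp

lemma pm_int: "length ys = length xs \<Longrightarrow> Suc m < length xs \<Longrightarrow> push_move b m xs ys =
       (if xs ! m < ys ! m \<and> ys ! m < xs ! Suc m \<and> ys = xs[m := ys ! m]
        then (1 - b) * b ^ (ys ! m - xs ! m - 1)
        else if ys ! m = xs ! Suc m
        then b ^ (xs ! Suc m - xs ! m - 1) * push_move b (Suc m) (xs[m := xs ! Suc m]) ys
        else 0)"
  by (subst push_move.simps) simp


lemma push_move_sorted:
  "push_move b m xs ys \<noteq> 0 \<Longrightarrow> (\<forall>i. m \<le> i \<longrightarrow> Suc i < length xs \<longrightarrow> xs!i < xs!Suc i) \<Longrightarrow>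
   xs!m < ys!m \<and> (\<forall>i. m \<le> i \<longrightarrow> Suc i < length ys \<longrightarrow> ys!i < ys!Suc i)"
proof (induction b m xs ys rule: push_move.induct)
  case (1 b m xs ys)
  have L: "length ys = length xs" "m < length xs" using push_move_support[OF "1.prems"(1)] by auto
  show ?case
  proof (cases "Suc m = length xs")
    case True
    have "xs ! m < ys ! m \<and> ys = xs[m := ys ! m]" using "1.prems"(1) pm_last[OF L(1) True] by (auto split: if_splits)
    then show ?thesis using True L by auto
  next
    case F2: False
    have sm: "Suc m < length xs" using L F2 by auto
    show ?thesis
    proof (cases "xs ! m < ys ! m \<and> ys ! m < xs ! Suc m \<and> ys = xs[m := ys ! m]")
      case True
      then obtain v where v: "ys = xs[m := v]" "xs ! m < v" "v < xs ! Suc m" by metis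
      show ?thesis
      proof (intro conjI allI impI)
        fix i assume i: "m \<le> i" "Suc i < length ys"
        show "ys ! i < ys ! Suc i"
          using v i L "1.prems"(2) by (cases "i = m") auto
      qed (use v L in auto)
    next
      case F3: False
      have eq: "ys ! m = xs ! Suc m" and nz: "push_move b (Suc m) (xs[m := xs ! Suc m]) ys \<noteq> 0"
        using "1.prems"(1) pm_int[OF L(1) sm] F3 by (auto split: if_splits)
      have so: "\<forall>i. Suc m \<le> i \<longrightarrow> Suc i < length (xs[m := xs ! Suc m]) \<longrightarrow> xs[m := xs ! Suc m] ! i < xs[m := xs ! Suc m] ! Suc i"
        using "1.prems"(2) by auto
      have IH: "xs[m := xs ! Suc m] ! Suc m < ys ! Suc m \<and> (\<forall>i. Suc m \<le> i \<longrightarrow> Suc i < length ys \<longrightarrow> ys ! i < ys ! Suc i)"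
        using "1.IH"[OF _ F2 F3 eq nz so] L by auto
      have a: "xs ! m < xs ! Suc m" using "1.prems"(2) sm by auto
      show ?thesis
      proof (intro conjI allI impI)
        show "xs ! m < ys ! m" using a eq by simp
        fix i assume i: "m \<le> i" "Suc i < length ys"
        show "ys ! i < ys ! Suc i"
        proof (cases "i = m")
          case True then show ?thesis using IH eq sm by auto
        next
          case False then show ?thesis using IH i by auto
        qed
      qed
    qed
  qed
qed

lemma push_move_XN:
  assumes "xs \<in> XN N" "push_move b m xs ys \<noteq> 0" shows "ys \<in> XN N"
proof -
  have L: "length ys = length xs" "m < length xs" "\<forall>i<m. ys ! i = xs ! i" using push_move_support[OF assms(2)] by auto
  have sx: "\<forall>i. Suc i < length xs \<longrightarrow> xs!i < xs!Suc i" using assms(1) unfolding XN_def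
    by (simp add: sorted_wrt_iff_nth_Suc_transp)
  have S: "xs!m < ys!m \<and> (\<forall>i. m \<le> i \<longrightarrow> Suc i < length ys \<longrightarrow> ys!i < ys!Suc i)"
    using push_move_sorted[OF assms(2)] sx by auto
  have "\<forall>i. Suc i < length ys \<longrightarrow> ys!i < ys!Suc i"
  proof (intro allI impI)
    fix i assume i: "Suc i < length ys"
    consider "Suc i < m" | "Suc i = m" | "m \<le> i" by linarith
    then show "ys!i < ys!Suc i"
    proof cases
      case 1 then show ?thesis using L sx i by auto
    next
      case 2 then show ?thesis using L sx i S by (metis lessI less_trans)
    next
      case 3 then show ?thesis using S i by auto
    qed
  qed
  then show ?thesis using assms(1) L unfolding XN_def by (simp add: sorted_wrt_iff_nth_Suc_transp)
qed


definition Fw :: "(nat \<Rightarrow> 'a::real_normed_field) \<Rightarrow> nat list \<Rightarrow> 'a" where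
  "Fw w y = (\<Prod>i<length y. w i ^ (y!i))"
definition Fr :: "(nat \<Rightarrow> 'a::real_normed_field) \<Rightarrow> nat list \<Rightarrow> nat \<Rightarrow> 'a" where
  "Fr w y m = (\<Prod>i\<in>{..<length y}-{m}. w i ^ (y!i))"
definition psi :: "real \<Rightarrow> 'a::real_normed_field \<Rightarrow> 'a" where
  "psi b u = of_real (1-b) / (1 - of_real b * u)"
definition phi :: "real \<Rightarrow> 'a::real_normed_field \<Rightarrow> 'a" where
  "phi b u = u * psi b u"
definition Gf :: "real \<Rightarrow> 'a::real_normed_field \<Rightarrow> 'a \<Rightarrow> 'a" where
  "Gf b u v = phi b v - psi b u"

function Wdev :: "real \<Rightarrow> (nat \<Rightarrow> 'a::real_normed_field) \<Rightarrow> nat \<Rightarrow> nat list \<Rightarrow> 'a" where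
  "Wdev b w m x = (if Suc m < length x then of_real (b ^ (x!Suc m - x!m - 1)) *
      (Gf b (w m) (w (Suc m)) * Fw w (x[m := x!Suc m]) + Wdev b w (Suc m) (x[m := x!Suc m])) else 0)"
  by pat_completeness auto
termination
  by (relation "Wellfounded.measure (\<lambda>(b, w, m, x). length x - m)") auto

declare Wdev.simps[simp del]

lemma Fw_split: "m < length x \<Longrightarrow> Fw w x = Fr w x m * w m ^ (x!m)"
  unfolding Fw_def Fr_def by (subst prod.remove[of _ m]) (auto simp: mult.commute)

lemma Fr_upd: "Fr w (x[m:=v]) m = Fr w x m"
  unfolding Fr_def by (intro prod.cong) auto

lemma Fw_upd: "m < length x \<Longrightarrow> Fw w (x[m:=v]) = Fr w x m * w m ^ v"
  using Fw_split[of m "x[m:=v]" w] by (simp add: Fr_upd)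

lemma geo_fin:
  fixes w :: "'a::real_normed_field"
  assumes "a < c"
  shows "(\<Sum>v\<in>{a<..<c}. of_real (b^(v-a-1)) * w^v) * (1 - of_real b * w) = w^(Suc a) - of_real (b^(c-a-1)) * w^c"
proof -
  obtain d where c: "c = Suc a + d" using assms less_iff_Suc_add by blast
  show ?thesis unfolding c
  proof (induction d)
    case 0
    have "{a<..<Suc a} = {}" by auto
    then show ?case by simp
  next
    case (Suc d)
    have "{a<..<Suc a + Suc d} = insert (Suc a + d) {a<..<Suc a + d}" by auto
    define S where "S = (\<Sum>v\<in>{a<..<Suc a + d}. of_real (b^(v-a-1)) * w^v)"
    have "(\<Sum>v\<in>{a<..<Suc a + Suc d}. of_real (b^(v-a-1)) * w^v) =
       of_real (b^d) * w^(Suc a + d) + S" unfolding S_def using \<open>{a<..<Suc a + Suc d} = _\<close> by simp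
    then have "(\<Sum>v\<in>{a<..<Suc a + Suc d}. of_real (b^(v-a-1)) * w^v) * (1 - of_real b * w) =
       of_real (b^d) * w^(Suc a + d) * (1 - of_real b * w) + S * (1 - of_real b * w)"
      by (simp add: distrib_right)
    also have "S * (1 - of_real b * w) = w^(Suc a) - of_real (b^d) * w^(Suc a + d)"
      using Suc unfolding S_def by simp
    finally show ?case by (simp add: algebra_simps)
  qed
qed

lemma has_sum_image_UNIV:
  assumes "inj_on h S" "\<And>y. y \<notin> h ` S \<Longrightarrow> f y = 0" "((\<lambda>v. f (h v)) has_sum s) S"
  shows "(f has_sum s) UNIV"
proof -
  have "(f has_sum s) (h ` S)" using has_sum_reindex[OF assms(1), of f s] assms(3) by (simp add: o_def)
  then show ?thesis by (subst (asm) has_sum_cong_neutral[where T=UNIV and g=f]) (use assms(2) in auto)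
qed

lemma geo_inf:
  fixes w :: "'a::{real_normed_field,banach}"
  assumes "norm (of_real b * w) < 1"
  shows "((\<lambda>j. of_real ((1-b) * b^j) * w^(Suc a + j)) has_sum (phi b w * w^a)) UNIV"
proof -
  have "(\<lambda>j. (of_real b * w)^j) sums (1 / (1 - of_real b * w))" using geometric_sums[OF assms] by simp
  moreover have "summable (\<lambda>j. norm ((of_real b * w)^j))"
    using assms by (simp add: norm_power summable_geometric)
  ultimately have "((\<lambda>j. (of_real b * w)^j) has_sum (1 / (1 - of_real b * w))) UNIV"
    by (rule norm_summable_imp_has_sum[rotated])
  from has_sum_cmult_right[OF this, of "of_real (1-b) * w^(Suc a)"]
  show ?thesis unfolding phi_def psi_def by (simp add: power_add power_mult_distrib algebra_simps diff_divide_distrib)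
qed


lemma pm_decomp:
  assumes "Suc m < length x"
  shows "push_move b m x y =
    (if x!m < y!m \<and> y!m < x!Suc m \<and> y = x[m := y!m] then (1-b) * b^(y!m - x!m - 1) else 0)
    + b^(x!Suc m - x!m - 1) * push_move b (Suc m) (x[m := x!Suc m]) y"
proof (cases "length y = length x")
  case False
  then show ?thesis using pm_bad[of y x] pm_bad[of y "x[m := x!Suc m]"] by (auto dest: arg_cong[of _ _ length])
next
  case True
  have B0: "push_move b (Suc m) (x[m := x!Suc m]) y = 0" if "y!m \<noteq> x!Suc m"
  proof (rule ccontr)
    assume ne: "push_move b (Suc m) (x[m := x!Suc m]) y \<noteq> 0"
    have "y!m = x[m := x!Suc m]!m" using push_move_support[OF ne] by auto
    then show False using that assms by simp
  qed
  show ?thesis using pm_int[OF True assms, of b] B0 by auto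
qed

lemma gen_aux:
  fixes w :: "nat \<Rightarrow> 'a::{real_normed_field,banach}"
  assumes b: "0 \<le> b" "b < 1"
  shows "length x - Suc m = d \<Longrightarrow> \<forall>i<length x. norm (of_real b * w i) < 1 \<Longrightarrow> m < length x \<Longrightarrow>
    \<forall>i. m \<le> i \<longrightarrow> Suc i < length x \<longrightarrow> x!i < x!Suc i \<Longrightarrow>
    ((\<lambda>y. of_real (push_move b m x y) * Fw w y) has_sum (phi b (w m) * Fw w x + Wdev b w m x)) UNIV"
proof (induction d arbitrary: m x)
  case 0
  then have last: "Suc m = length x" by auto
  have W0: "Wdev b w m x = 0" using last by (subst Wdev.simps) simp
  define h where "h j = x[m := x!m + Suc j]" for j
  have inj: "inj_on h UNIV" unfolding h_def inj_on_def
    by (metis "0.prems"(3) add_left_cancel nth_list_update_eq old.nat.inject)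
  have out: "of_real (push_move b m x y) * Fw w y = 0" if "y \<notin> h ` UNIV" for y
  proof (cases "length y = length x")
    case False then show ?thesis using pm_bad by auto
  next
    case True
    have "push_move b m x y = 0"
    proof (rule ccontr)
      assume "push_move b m x y \<noteq> 0"
      then have c: "x ! m < y ! m \<and> y = x[m := y ! m]" using pm_last[OF True last] by (auto split: if_splits)
      then have "y = h (y!m - x!m - 1)" unfolding h_def by auto
      then show False using that by auto
    qed
    then show ?thesis by simp
  qed
  have val: "of_real (push_move b m x (h j)) * Fw w (h j) =
      Fr w x m * (of_real ((1-b) * b^j) * w m ^ (Suc (x!m) + j))" for j
  proof -
    have l: "length (h j) = length x" unfolding h_def by simp
    have p1: "push_move b m x (h j) = (1-b) * b^j"
      using "0.prems"(3) by (subst pm_last[OF l last]) (simp add: h_def)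
    have p2: "Fw w (h j) = Fr w x m * w m ^ (Suc (x!m) + j)"
      unfolding h_def using Fw_upd[OF "0.prems"(3), of w "x!m + Suc j"] by simp
    show ?thesis by (simp only: p1 p2) (simp only: mult_ac)
  qed
  have nw: "norm (of_real b * w m) < 1" using "0.prems" by auto
  have "((\<lambda>j. of_real (push_move b m x (h j)) * Fw w (h j)) has_sum (Fr w x m * (phi b (w m) * w m ^ (x!m)))) UNIV"
    unfolding val by (rule has_sum_cmult_right[OF geo_inf[OF nw]])
  then have "((\<lambda>y. of_real (push_move b m x y) * Fw w y) has_sum (Fr w x m * (phi b (w m) * w m ^ (x!m)))) UNIV"
    by (rule has_sum_image_UNIV[OF inj out, rotated])
  then show ?case using W0 Fw_split[OF "0.prems"(3), of w] by (simp add: algebra_simps)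
next
  case (Suc d)
  define x' where "x' = x[m := x!Suc m]"
  have sm: "Suc m < length x" using Suc.prems by auto
  define a where "a = x!m"
  define c where "c = x!Suc m"
  have ac: "a < c" using Suc.prems(4) sm unfolding a_def c_def by auto
  define g where "g = c - a - 1"
  have lx': "length x' = length x" unfolding x'_def by simp
  have IH: "((\<lambda>y. of_real (push_move b (Suc m) x' y) * Fw w y) has_sum (phi b (w (Suc m)) * Fw w x' + Wdev b w (Suc m) x')) UNIV"
    using Suc.IH[of x' "Suc m"] Suc.prems sm unfolding x'_def by auto
  then have B: "((\<lambda>y. of_real (b^g) * (of_real (push_move b (Suc m) x' y) * Fw w y)) has_sum
       (of_real (b^g) * (phi b (w (Suc m)) * Fw w x' + Wdev b w (Suc m) x'))) UNIV"
    by (rule has_sum_cmult_right)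
  define S where "S = {a<..<c}"
  define h where "h v = x[m := v]" for v
  define fA where "fA y = of_real (if x!m < y!m \<and> y!m < x!Suc m \<and> y = x[m := y!m] then (1-b) * b^(y!m - x!m - 1) else 0) * Fw w y" for y
  have inj: "inj_on h S" unfolding h_def inj_on_def by (metis nth_list_update_eq sm Suc_lessD)
  have out: "fA y = 0" if "y \<notin> h ` S" for y
  proof -
    have nc: "\<not> (x!m < y!m \<and> y!m < x!Suc m \<and> y = x[m := y!m])"
    proof
      assume "x!m < y!m \<and> y!m < x!Suc m \<and> y = x[m := y!m]"
      then have "y \<in> h ` S" unfolding h_def S_def a_def c_def by (intro image_eqI[of _ _ "y!m"]) auto
      then show False using that by simp
    qed
    show ?thesis unfolding fA_def by (simp only: if_not_P[OF nc] of_real_0 mult_zero_left)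
  qed
  have valA: "fA (h v) = Fr w x m * (of_real (1-b) * (of_real (b^(v-a-1)) * w m ^ v))" if "v \<in> S" for v
    using that sm Fw_upd[of m x w v] unfolding fA_def h_def S_def a_def c_def by (auto simp: algebra_simps)
  have "((\<lambda>v. fA (h v)) has_sum (\<Sum>v\<in>S. fA (h v))) S" unfolding S_def by simp
  then have A: "(fA has_sum (\<Sum>v\<in>S. fA (h v))) UNIV"
    by (rule has_sum_image_UNIV[OF inj out, rotated])
  have sumA: "(\<Sum>v\<in>S. fA (h v)) = Fr w x m * of_real (1-b) * (\<Sum>v\<in>S. of_real (b^(v-a-1)) * w m ^ v)"
    by (simp add: valA sum_distrib_left algebra_simps)
  have nw: "norm (of_real b * w m) < 1" using Suc.prems sm by auto
  then have q: "1 - of_real b * w m \<noteq> 0" by (metis norm_one order_less_irrefl right_minus_eq)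
  have geo: "(\<Sum>v\<in>S. of_real (b^(v-a-1)) * w m ^ v) = (w m ^ Suc a - of_real (b^g) * w m ^ c) / (1 - of_real b * w m)"
    using geo_fin[OF ac, of b "w m"] q unfolding S_def g_def by (simp add: field_simps)
  have Fx: "Fw w x = Fr w x m * w m ^ a" using Fw_split[OF Suc_lessD[OF sm]] unfolding a_def .
  have Fx': "Fw w x' = Fr w x m * w m ^ c" using Fw_upd[OF Suc_lessD[OF sm]] unfolding x'_def c_def .
  have sumA': "(\<Sum>v\<in>S. fA (h v)) = phi b (w m) * Fw w x - of_real (b^g) * (psi b (w m) * Fw w x')"
    unfolding sumA geo Fx Fx' phi_def psi_def by (simp add: divide_inverse algebra_simps)
  have W: "Wdev b w m x = of_real (b^g) * (Gf b (w m) (w (Suc m)) * Fw w x' + Wdev b w (Suc m) x')"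
    using sm unfolding x'_def g_def a_def c_def by (subst Wdev.simps) simp
  have eqf: "of_real (push_move b m x y) * Fw w y = fA y + of_real (b^g) * (of_real (push_move b (Suc m) x' y) * Fw w y)" for y
    unfolding fA_def x'_def g_def a_def c_def by (subst pm_decomp[OF sm]) (simp add: algebra_simps)
  have "((\<lambda>y. fA y + of_real (b^g) * (of_real (push_move b (Suc m) x' y) * Fw w y)) has_sum
     ((\<Sum>v\<in>S. fA (h v)) + of_real (b^g) * (phi b (w (Suc m)) * Fw w x' + Wdev b w (Suc m) x'))) UNIV"
    by (rule has_sum_add[OF A B])
  moreover have "(\<Sum>v\<in>S. fA (h v)) + of_real (b^g) * (phi b (w (Suc m)) * Fw w x' + Wdev b w (Suc m) x')
     = phi b (w m) * Fw w x + Wdev b w m x"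
    unfolding sumA' W Gf_def by (simp add: algebra_simps)
  ultimately show ?case unfolding eqf by simp
qed


lemma gen:
  fixes w :: "nat \<Rightarrow> 'a::{real_normed_field,banach}"
  assumes "0 \<le> b" "b < 1" "\<forall>i<length x. norm (of_real b * w i) < 1" "m < length x"
    "\<forall>i. Suc i < length x \<longrightarrow> x!i < x!Suc i"
  shows "((\<lambda>y. of_real (push_move b m x y) * Fw w y) has_sum (phi b (w m) * Fw w x + Wdev b w m x)) UNIV"
  by (rule gen_aux[OF assms(1,2) refl]) (use assms in auto)

lemma num_swap:
  fixes F :: "nat \<Rightarrow> nat \<Rightarrow> 'a::comm_monoid_mult"
  assumes "Suc k < N"
  shows "(\<Prod>(i,j)\<in>{(i,j). i<j \<and> j<N}. F (Transposition.transpose k (Suc k) i) (Transposition.transpose k (Suc k) j)) * F k (Suc k)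
       = (\<Prod>(i,j)\<in>{(i,j). i<j \<and> j<N}. F i j) * F (Suc k) k"
proof -
  define P where "P = {(i,j). i<j \<and> j<N}"
  define P' where "P' = P - {(k, Suc k)}"
  define \<tau> where "\<tau> = Transposition.transpose k (Suc k)"
  have fin: "finite P'" unfolding P'_def P_def
    by (rule finite_subset[of _ "{..<N} \<times> {..<N}"]) auto
  have PP: "P = insert (k, Suc k) P'" "(k, Suc k) \<notin> P'" unfolding P'_def P_def using assms by auto
  have mem: "(\<tau> i, \<tau> j) \<in> P'" if "(i,j) \<in> P'" for i j
    using that assms unfolding P'_def P_def \<tau>_def Transposition.transpose_def by (auto split: if_splits)
  have re: "(\<Prod>(i,j)\<in>P'. F (\<tau> i) (\<tau> j)) = (\<Prod>(i,j)\<in>P'. F i j)"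
    by (rule prod.reindex_bij_witness[where i="\<lambda>(i,j). (\<tau> i, \<tau> j)" and j="\<lambda>(i,j). (\<tau> i, \<tau> j)"])
       (auto simp: \<tau>_def mem[unfolded \<tau>_def])
  have "(\<Prod>(i,j)\<in>P. F (\<tau> i) (\<tau> j)) = F (Suc k) k * (\<Prod>(i,j)\<in>P'. F i j)"
    unfolding PP(1) using fin PP(2) re by (simp add: \<tau>_def)
  moreover have "(\<Prod>(i,j)\<in>P. F i j) = F k (Suc k) * (\<Prod>(i,j)\<in>P'. F i j)"
    unfolding PP(1) using fin PP(2) by simp
  ultimately show ?thesis unfolding P_def[symmetric] \<tau>_def[symmetric] by (simp add: mult_ac)
qed

lemma A_coef_eq:
  "A_coef b N z p = of_int (sign p) * ((\<Prod>(i,j)\<in>{(i,j). i<j \<and> j<N}. Afac b (z (p i)) (z (p j))) /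
      (\<Prod>(i,j)\<in>{(i,j). i<j \<and> j<N}. Afac b (z i) (z j)))"
  unfolding A_coef_def by (subst prod_dividef[symmetric]) (simp add: case_prod_unfold)

lemma A_swap:
  assumes "\<sigma> permutes {..<N}" "Suc k < N"
  shows "A_coef b N z (\<sigma> \<circ> Transposition.transpose k (Suc k)) * Afac b (z (\<sigma> k)) (z (\<sigma> (Suc k)))
       = - (A_coef b N z \<sigma> * Afac b (z (\<sigma> (Suc k))) (z (\<sigma> k)))"
proof -
  define \<tau> where "\<tau> = Transposition.transpose k (Suc k)"
  have pt: "\<tau> permutes {..<N}" unfolding \<tau>_def using assms(2) by (intro permutes_swap_id) auto
  have sg: "sign (\<sigma> \<circ> \<tau>) = - sign \<sigma>"
    using sign_compose[OF permutes_imp_permutation[OF _ assms(1)] permutes_imp_permutation[OF _ pt]]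
    by (simp add: \<tau>_def sign_swap_id)
  define den where "den = (\<Prod>(i,j)\<in>{(i,j). i<j \<and> j<N}. Afac b (z i) (z j))"
  have ns: "(\<Prod>(i,j)\<in>{(i,j). i<j \<and> j<N}. Afac b (z ((\<sigma> \<circ> \<tau>) i)) (z ((\<sigma> \<circ> \<tau>) j))) * Afac b (z (\<sigma> k)) (z (\<sigma> (Suc k)))
    = (\<Prod>(i,j)\<in>{(i,j). i<j \<and> j<N}. Afac b (z (\<sigma> i)) (z (\<sigma> j))) * Afac b (z (\<sigma> (Suc k))) (z (\<sigma> k))"
    using num_swap[OF assms(2), of "\<lambda>a c. Afac b (z (\<sigma> a)) (z (\<sigma> c))"] by (simp add: \<tau>_def o_def)
  show ?thesis
    unfolding A_coef_eq \<tau>_def[symmetric] den_def[symmetric] sg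
    using ns by (simp add: divide_inverse mult_ac)
qed


lemma Gf_eq:
  fixes u v :: complex
  assumes "1 - of_real b * u \<noteq> 0" "1 - of_real b * v \<noteq> 0"
  shows "Gf b u v = - (of_real (1-b) / ((1 - of_real b * u) * (1 - of_real b * v))) * Afac b v u"
  using assms unfolding Gf_def phi_def psi_def Afac_def by (simp add: divide_simps) (simp add: algebra_simps)

lemma cancel_pair:
  fixes z :: "nat \<Rightarrow> complex"
  assumes k: "Suc k < N" and y: "length y = N" "y!k = y!Suc k"
    and nz: "\<forall>i<N. 1 - of_real b * z i \<noteq> 0"
  shows "(\<Sum>\<sigma>\<in>{\<sigma>. \<sigma> permutes {..<N}}. A_coef b N z \<sigma> * (Gf b (z (\<sigma> k)) (z (\<sigma> (Suc k))) * Fw (z \<circ> \<sigma>) y)) = 0"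
proof -
  define \<tau> where "\<tau> = Transposition.transpose k (Suc k)"
  have pt: "\<tau> permutes {..<N}" unfolding \<tau>_def using k by (intro permutes_swap_id) auto
  define h where "h \<sigma> = A_coef b N z \<sigma> * (Gf b (z (\<sigma> k)) (z (\<sigma> (Suc k))) * Fw (z \<circ> \<sigma>) y)" for \<sigma>
  have yt: "y ! (\<tau> i) = y ! i" for i using y(2) unfolding \<tau>_def Transposition.transpose_def by auto
  have hneg: "h (\<sigma> \<circ> \<tau>) = - h \<sigma>" if s: "\<sigma> permutes {..<N}" for \<sigma>
  proof -
    have lt: "\<sigma> k < N" "\<sigma> (Suc k) < N" using permutes_in_image[OF s] k by auto
    define c where "c = - (of_real (1-b) / ((1 - of_real b * z (\<sigma> k)) * (1 - of_real b * z (\<sigma> (Suc k)))))"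
    have G1: "Gf b (z (\<sigma> k)) (z (\<sigma> (Suc k))) = c * Afac b (z (\<sigma> (Suc k))) (z (\<sigma> k))"
      unfolding c_def using Gf_eq nz lt by blast
    have G2: "Gf b (z (\<sigma> (Suc k))) (z (\<sigma> k)) = c * Afac b (z (\<sigma> k)) (z (\<sigma> (Suc k)))"
      unfolding c_def using Gf_eq[of b "z (\<sigma> (Suc k))" "z (\<sigma> k)"] nz lt by (simp add: mult_ac)
    have F: "Fw (z \<circ> (\<sigma> \<circ> \<tau>)) y = Fw (z \<circ> \<sigma>) y"
    proof -
      have "Fw (z \<circ> (\<sigma> \<circ> \<tau>)) y = (\<Prod>i<N. ((\<lambda>i. z (\<sigma> i) ^ (y!i)) \<circ> \<tau>) i)"
        unfolding Fw_def y(1) by (simp add: yt)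
      also have "\<dots> = (\<Prod>i<N. z (\<sigma> i) ^ (y!i))" by (rule prod.permute[OF pt, symmetric])
      finally show ?thesis unfolding Fw_def y(1) by simp
    qed
    have "h (\<sigma> \<circ> \<tau>) = A_coef b N z (\<sigma> \<circ> \<tau>) * (Gf b (z (\<sigma> (Suc k))) (z (\<sigma> k)) * Fw (z \<circ> \<sigma>) y)"
      unfolding h_def F by (simp add: \<tau>_def)
    also have "\<dots> = c * Fw (z \<circ> \<sigma>) y * (A_coef b N z (\<sigma> \<circ> \<tau>) * Afac b (z (\<sigma> k)) (z (\<sigma> (Suc k))))"
      unfolding G2 by (simp add: mult_ac)
    also have "\<dots> = - (c * Fw (z \<circ> \<sigma>) y * (A_coef b N z \<sigma> * Afac b (z (\<sigma> (Suc k))) (z (\<sigma> k))))"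
      unfolding \<tau>_def A_swap[OF s k] by simp
    also have "\<dots> = - h \<sigma>" unfolding h_def G1 by (simp add: mult_ac)
    finally show ?thesis .
  qed
  have "sum h {\<sigma>. \<sigma> permutes {..<N}} = sum (\<lambda>\<sigma>. h (\<sigma> \<circ> \<tau>)) {\<sigma>. \<sigma> permutes {..<N}}"
    by (rule sum_permutations_compose_right[OF pt])
  also have "\<dots> = - sum h {\<sigma>. \<sigma> permutes {..<N}}"
    by (simp add: hneg sum_negf)
  finally have "sum h {\<sigma>. \<sigma> permutes {..<N}} = 0" by simp
  then show ?thesis unfolding h_def .
qed

lemma Wdev_cancel:
  fixes z :: "nat \<Rightarrow> complex"
  assumes nz: "\<forall>i<N. 1 - of_real b * z i \<noteq> 0"
  shows "length x = N \<Longrightarrow> (\<Sum>\<sigma>\<in>{\<sigma>. \<sigma> permutes {..<N}}. A_coef b N z \<sigma> * Wdev b (z \<circ> \<sigma>) m x) = 0"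
proof (induction "length x - m" arbitrary: m x rule: less_induct)
  case less
  show ?case
  proof (cases "Suc m < length x")
    case False then show ?thesis by (subst Wdev.simps) simp
  next
    case True
    define x' where "x' = x[m := x!Suc m]"
    define c where "c = (of_real (b ^ (x!Suc m - x!m - 1)) :: complex)"
    have W: "Wdev b (z \<circ> \<sigma>) m x = c * (Gf b (z (\<sigma> m)) (z (\<sigma> (Suc m))) * Fw (z \<circ> \<sigma>) x' + Wdev b (z \<circ> \<sigma>) (Suc m) x')" for \<sigma>
      using True unfolding x'_def c_def by (subst Wdev.simps) simp
    have l': "length x' = N" using less.prems unfolding x'_def by simp
    have IH: "(\<Sum>\<sigma>\<in>{\<sigma>. \<sigma> permutes {..<N}}. A_coef b N z \<sigma> * Wdev b (z \<circ> \<sigma>) (Suc m) x') = 0"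
      using less.hyps[of x' "Suc m"] True l' less.prems unfolding x'_def by simp
    have P: "(\<Sum>\<sigma>\<in>{\<sigma>. \<sigma> permutes {..<N}}. A_coef b N z \<sigma> * (Gf b (z (\<sigma> m)) (z (\<sigma> (Suc m))) * Fw (z \<circ> \<sigma>) x')) = 0"
      by (rule cancel_pair[OF _ l' _ nz]) (use True less.prems in \<open>auto simp: x'_def\<close>)
    have "(\<Sum>\<sigma>\<in>{\<sigma>. \<sigma> permutes {..<N}}. A_coef b N z \<sigma> * Wdev b (z \<circ> \<sigma>) m x)
      = c * ((\<Sum>\<sigma>\<in>{\<sigma>. \<sigma> permutes {..<N}}. A_coef b N z \<sigma> * (Gf b (z (\<sigma> m)) (z (\<sigma> (Suc m))) * Fw (z \<circ> \<sigma>) x'))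
           + (\<Sum>\<sigma>\<in>{\<sigma>. \<sigma> permutes {..<N}}. A_coef b N z \<sigma> * Wdev b (z \<circ> \<sigma>) (Suc m) x'))"
      unfolding W by (simp add: sum_distrib_left sum.distrib algebra_simps)
    then show ?thesis using IH P by simp
  qed
qed


lemma has_sum_sum_fin:
  fixes f :: "'i \<Rightarrow> 'a \<Rightarrow> 'b::topological_comm_monoid_add"
  assumes "finite I" "\<And>i. i \<in> I \<Longrightarrow> (f i has_sum s i) A"
  shows "((\<lambda>x. \<Sum>i\<in>I. f i x) has_sum (\<Sum>i\<in>I. s i)) A"
  using assms
proof (induction I rule: finite_induct)
  case empty then show ?case by simp
next
  case (insert i I)
  then show ?case by (simp add: has_sum_add)
qed

lemma nz_of_norm: "norm (of_real b * (u::'a::real_normed_field)) < 1 \<Longrightarrow> 1 - of_real b * u \<noteq> 0"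
  by (metis norm_one order_less_irrefl right_minus_eq)

lemma Phi_Fw: "length y = N \<Longrightarrow> Phi b N y z = (\<Sum>\<sigma>\<in>{\<sigma>. \<sigma> permutes {..<N}}. A_coef b N z \<sigma> * Fw (z \<circ> \<sigma>) y)"
  unfolding Phi_def Fw_def by simp

lemma XN_sorted: "x \<in> XN N \<Longrightarrow> length x = N \<and> (\<forall>i. Suc i < length x \<longrightarrow> x!i < x!Suc i)"
  unfolding XN_def by (simp add: sorted_wrt_iff_nth_Suc_transp)

lemma jump_kernel_XN: "x \<in> XN N \<Longrightarrow> jump_kernel b N x y \<noteq> 0 \<Longrightarrow> y \<in> XN N"
  unfolding jump_kernel_def using push_move_XN by (metis (no_types, lifting) div_0 sum.neutral)

lemma eigen:
  fixes z :: "nat \<Rightarrow> complex"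
  assumes b: "0 \<le> b" "b < 1" and nz: "\<forall>i<N. norm (of_real b * z i) < 1" and x: "x \<in> XN N"
  shows "((\<lambda>y. of_real (jump_kernel b N x y) * Phi b N y z) has_sum
           ((\<Sum>m<N. phi b (z m)) / of_nat N * Phi b N x z)) (XN N)"
proof -
  define Pm where "Pm = {\<sigma>. \<sigma> permutes {..<N}}"
  have finP: "finite Pm" unfolding Pm_def by (rule finite_permutations) simp
  have lx: "length x = N" and sx: "\<forall>i. Suc i < length x \<longrightarrow> x!i < x!Suc i" using XN_sorted[OF x] by auto
  have nz1: "\<forall>i<N. 1 - of_real b * z i \<noteq> 0" using nz nz_of_norm by blast
  have G: "((\<lambda>y. A_coef b N z \<sigma> * (of_real (push_move b m x y) * Fw (z \<circ> \<sigma>) y)) has_sum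
       (A_coef b N z \<sigma> * (phi b (z (\<sigma> m)) * Fw (z \<circ> \<sigma>) x + Wdev b (z \<circ> \<sigma>) m x))) UNIV"
    if m: "m < N" and s: "\<sigma> \<in> Pm" for m \<sigma>
  proof -
    have "\<forall>i<length x. norm (of_real b * (z \<circ> \<sigma>) i) < 1"
      using nz permutes_in_image[of \<sigma> "{..<N}"] s lx unfolding Pm_def by auto
    have "m < length x" using m lx by simp
    from has_sum_cmult_right[OF gen[OF b \<open>\<forall>i<length x. _\<close> this sx], of "A_coef b N z \<sigma>"] show ?thesis by (simp add: comp_def)
  qed
  define f where "f y = (\<Sum>m<N. \<Sum>\<sigma>\<in>Pm. A_coef b N z \<sigma> * (of_real (push_move b m x y) * Fw (z \<circ> \<sigma>) y))" for y
  have H: "(f has_sum (\<Sum>m<N. \<Sum>\<sigma>\<in>Pm. A_coef b N z \<sigma> * (phi b (z (\<sigma> m)) * Fw (z \<circ> \<sigma>) x + Wdev b (z \<circ> \<sigma>) m x))) UNIV"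
    unfolding f_def by (intro has_sum_sum_fin finP G) auto
  have perm_sum: "(\<Sum>m<N. phi b (z (\<sigma> m))) = (\<Sum>m<N. phi b (z m))" if "\<sigma> \<in> Pm" for \<sigma>
    using sum.permute[of \<sigma> "{..<N}" "\<lambda>m. phi b (z m)"] that unfolding Pm_def by (simp add: o_def)
  have val: "(\<Sum>m<N. \<Sum>\<sigma>\<in>Pm. A_coef b N z \<sigma> * (phi b (z (\<sigma> m)) * Fw (z \<circ> \<sigma>) x + Wdev b (z \<circ> \<sigma>) m x))
     = (\<Sum>m<N. phi b (z m)) * Phi b N x z"
  proof -
    have "(\<Sum>m<N. \<Sum>\<sigma>\<in>Pm. A_coef b N z \<sigma> * (phi b (z (\<sigma> m)) * Fw (z \<circ> \<sigma>) x + Wdev b (z \<circ> \<sigma>) m x))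
      = (\<Sum>m<N. \<Sum>\<sigma>\<in>Pm. A_coef b N z \<sigma> * phi b (z (\<sigma> m)) * Fw (z \<circ> \<sigma>) x)
        + (\<Sum>m<N. \<Sum>\<sigma>\<in>Pm. A_coef b N z \<sigma> * Wdev b (z \<circ> \<sigma>) m x)"
      by (simp add: sum.distrib algebra_simps)
    also have "(\<Sum>m<N. \<Sum>\<sigma>\<in>Pm. A_coef b N z \<sigma> * Wdev b (z \<circ> \<sigma>) m x) = 0"
      using Wdev_cancel[OF nz1 lx] unfolding Pm_def by simp
    also have "(\<Sum>m<N. \<Sum>\<sigma>\<in>Pm. A_coef b N z \<sigma> * phi b (z (\<sigma> m)) * Fw (z \<circ> \<sigma>) x)
      = (\<Sum>\<sigma>\<in>Pm. A_coef b N z \<sigma> * Fw (z \<circ> \<sigma>) x * (\<Sum>m<N. phi b (z (\<sigma> m))))"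
      by (subst sum.swap) (simp add: sum_distrib_left mult_ac)
    also have "\<dots> = (\<Sum>\<sigma>\<in>Pm. A_coef b N z \<sigma> * Fw (z \<circ> \<sigma>) x * (\<Sum>m<N. phi b (z m)))"
      by (intro sum.cong refl) (simp add: perm_sum)
    also have "\<dots> = (\<Sum>m<N. phi b (z m)) * Phi b N x z"
      unfolding Phi_Fw[OF lx] Pm_def by (simp add: sum_distrib_left sum_distrib_right mult_ac)
    finally show ?thesis by (simp only: add_0_right)
  qed
  have H2: "((\<lambda>y. f y / of_nat N) has_sum ((\<Sum>m<N. phi b (z m)) / of_nat N * Phi b N x z)) UNIV"
    using has_sum_cmult_left[OF H, of "1 / of_nat N"] unfolding val by simp
  show ?thesis
  proof (subst has_sum_cong_neutral[where T=UNIV and g="\<lambda>y. f y / of_nat N"])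
    show "((\<lambda>y. f y / of_nat N) has_sum ((\<Sum>m<N. phi b (z m)) / of_nat N * Phi b N x z)) UNIV" by (rule H2)
  next
    fix y assume "y \<in> UNIV - XN N"
    then have "push_move b m x y = 0" for m using push_move_XN[OF x] by blast
    then show "f y / of_nat N = 0" unfolding f_def by simp
  next
    fix y assume "y \<in> XN N - UNIV" then show "of_real (jump_kernel b N x y) * Phi b N y z = 0" by simp
  next
    fix y assume y: "y \<in> XN N \<inter> UNIV"
    have ly: "length y = N" using XN_sorted y by blast
    show "of_real (jump_kernel b N x y) * Phi b N y z = f y / of_nat N"
      unfolding jump_kernel_def f_def Phi_Fw[OF ly] Pm_def
      by (simp add: sum_distrib_left sum_distrib_right sum_divide_distrib mult_ac sum.swap[of _ "{..<N}"])
  qed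
qed


lemma Fw_const_ge1: "(R::real) \<ge> 1 \<Longrightarrow> Fw (\<lambda>_. R) x \<ge> 1"
  unfolding Fw_def by (intro prod_ge_1) auto

lemma Wdev_bound:
  fixes R :: real
  assumes b: "0 \<le> b" "b * R < 1" and R: "R \<ge> 1"
  defines "B \<equiv> R * (1 + Gf b R R)"
  shows "(\<forall>i. m \<le> i \<longrightarrow> Suc i < length x \<longrightarrow> x!i < x!Suc i) \<Longrightarrow> Wdev b (\<lambda>_. R) m x \<le> B^(length x - m) * Fw (\<lambda>_. R) x"
proof (induction "length x - m" arbitrary: m x rule: less_induct)
  case less
  have G0: "Gf b R R \<ge> 0"
  proof -
    have "1 - b * R > 0" using b by simp
    moreover have "b \<le> b * R" using b R by (simp add: mult_le_cancel_left1)
    then have "b < 1" using b by linarith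
    ultimately have "psi b R \<ge> 0" unfolding psi_def by (simp add: divide_nonneg_pos)
    moreover have "Gf b R R = psi b R * (R - 1)" unfolding Gf_def phi_def by (simp add: algebra_simps)
    ultimately show ?thesis using R by simp
  qed
  have B1: "B \<ge> 1" unfolding B_def using mult_mono[of 1 R 1 "1 + Gf b R R"] G0 R by simp
  show ?case
  proof (cases "Suc m < length x")
    case False
    then show ?thesis using Fw_const_ge1[OF R, of x] B1 by (subst Wdev.simps) simp
  next
    case True
    define x' where "x' = x[m := x!Suc m]"
    define a where "a = x!m"
    define c where "c = x!Suc m"
    define g where "g = c - a - 1"
    have ac: "a < c" using less.prems True unfolding a_def c_def by auto
    have cg: "c = a + g + 1" unfolding g_def using ac by simp
    define K where "K = length x - m"
    have K: "length x - Suc m = K - 1" "K \<ge> 1" unfolding K_def using True by auto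
    have W: "Wdev b (\<lambda>_. R) m x = b^g * (Gf b R R * Fw (\<lambda>_. R) x' + Wdev b (\<lambda>_. R) (Suc m) x')"
      using True unfolding x'_def g_def a_def c_def by (subst Wdev.simps) simp
    have IH: "Wdev b (\<lambda>_. R) (Suc m) x' \<le> B^(K - 1) * Fw (\<lambda>_. R) x'"
      using less.hyps[of x' "Suc m"] less.prems True K unfolding x'_def by auto
    have Fx: "Fw (\<lambda>_. R) x = Fr (\<lambda>_. R) x m * R ^ a" using Fw_split[of m x] True unfolding a_def by simp
    have Fx': "Fw (\<lambda>_. R) x' = Fr (\<lambda>_. R) x m * R ^ c" using Fw_upd[of m x] True unfolding x'_def c_def by simp
    have Fr0: "Fr (\<lambda>_. R) x m \<ge> 0" unfolding Fr_def using R by (intro prod_nonneg) auto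
    have bg: "b^g * R^c \<le> R * R^a"
    proof -
      have "b^g * R^c = R * R^a * (b*R)^g" unfolding cg by (simp add: power_add power_mult_distrib mult_ac)
      also have "\<dots> \<le> R * R^a * 1" using b R by (intro mult_left_mono power_le_one) auto
      finally show ?thesis by simp
    qed
    have "Wdev b (\<lambda>_. R) m x \<le> b^g * (Gf b R R * Fw (\<lambda>_. R) x' + B^(K-1) * Fw (\<lambda>_. R) x')"
      unfolding W using IH b by (intro mult_left_mono add_left_mono) auto
    also have "\<dots> = b^g * (Gf b R R + B^(K-1)) * Fw (\<lambda>_. R) x'" by (simp add: algebra_simps)
    also have "\<dots> = (Gf b R R + B^(K-1)) * Fr (\<lambda>_. R) x m * (b^g * R^c)" unfolding Fx' by (simp add: mult_ac)
    also have "\<dots> \<le> (Gf b R R + B^(K-1)) * Fr (\<lambda>_. R) x m * (R * R^a)"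
      using bg G0 Fr0 B1 by (intro mult_left_mono) auto
    also have "\<dots> = R * (Gf b R R + B^(K-1)) * Fw (\<lambda>_. R) x" unfolding Fx by (simp add: mult_ac)
    also have "\<dots> \<le> R * ((1 + Gf b R R) * B^(K-1)) * Fw (\<lambda>_. R) x"
    proof -
      have "Gf b R R \<le> Gf b R R * B^(K-1)" using G0 B1 by (simp add: mult_le_cancel_left1)
      then show ?thesis using R Fw_const_ge1[OF R, of x] by (intro mult_right_mono mult_left_mono) (auto simp: algebra_simps)
    qed
    also have "\<dots> = B^K * Fw (\<lambda>_. R) x" unfolding B_def using K(2) by (cases K) (auto simp: mult_ac)
    finally show ?thesis unfolding K_def .
  qed
qed


lemma kbound:
  fixes R :: real
  assumes b: "0 \<le> b" "b < 1" and R: "R \<ge> 1" "b * R < 1" and N: "N > 0" and x: "x \<in> XN N"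
  shows "((\<lambda>y. jump_kernel b N x y * Fw (\<lambda>_. R) y) has_sum
     ((\<Sum>m<N. phi b R * Fw (\<lambda>_. R) x + Wdev b (\<lambda>_. R) m x) / real N)) (XN N)"
    and "(\<Sum>m<N. phi b R * Fw (\<lambda>_. R) x + Wdev b (\<lambda>_. R) m x) / real N
          \<le> (phi b R + (R * (1 + Gf b R R))^N) * Fw (\<lambda>_. R) x"
proof -
  have lx: "length x = N" and sx: "\<forall>i. Suc i < length x \<longrightarrow> x!i < x!Suc i" using XN_sorted[OF x] by auto
  have nw: "\<forall>i<length x. norm (of_real b * (\<lambda>_. R) i) < 1" using b R by simp
  have G: "((\<lambda>y. push_move b m x y * Fw (\<lambda>_. R) y) has_sum (phi b R * Fw (\<lambda>_. R) x + Wdev b (\<lambda>_. R) m x)) UNIV"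
    if "m < N" for m using gen[OF b nw, of m] that lx sx by simp
  have H: "((\<lambda>y. \<Sum>m<N. push_move b m x y * Fw (\<lambda>_. R) y) has_sum (\<Sum>m<N. phi b R * Fw (\<lambda>_. R) x + Wdev b (\<lambda>_. R) m x)) UNIV"
    by (intro has_sum_sum_fin G) auto
  have H2: "((\<lambda>y. (\<Sum>m<N. push_move b m x y * Fw (\<lambda>_. R) y) / real N) has_sum
      ((\<Sum>m<N. phi b R * Fw (\<lambda>_. R) x + Wdev b (\<lambda>_. R) m x) / real N)) UNIV"
    using has_sum_cmult_left[OF H, of "1 / real N"] by simp
  show "((\<lambda>y. jump_kernel b N x y * Fw (\<lambda>_. R) y) has_sum
     ((\<Sum>m<N. phi b R * Fw (\<lambda>_. R) x + Wdev b (\<lambda>_. R) m x) / real N)) (XN N)"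
  proof (subst has_sum_cong_neutral[where T=UNIV and g="\<lambda>y. (\<Sum>m<N. push_move b m x y * Fw (\<lambda>_. R) y) / real N"])
    fix y assume "y \<in> UNIV - XN N"
    then have "push_move b m x y = 0" for m using push_move_XN[OF x] by blast
    then show "(\<Sum>m<N. push_move b m x y * Fw (\<lambda>_. R) y) / real N = 0" by simp
  qed (use H2 in \<open>auto simp: jump_kernel_def sum_distrib_right\<close>)
  define B where "B = R * (1 + Gf b R R)"
  have G0: "Gf b R R \<ge> 0"
  proof -
    have "1 - b * R > 0" using R by simp
    then have "psi b R \<ge> 0" unfolding psi_def using b by (simp add: divide_nonneg_pos)
    moreover have "Gf b R R = psi b R * (R - 1)" unfolding Gf_def phi_def by (simp add: algebra_simps)
    ultimately show ?thesis using R by simp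
  qed
  have B1: "B \<ge> 1" unfolding B_def using mult_mono[of 1 R 1 "1 + Gf b R R"] G0 R by simp
  have Wb: "Wdev b (\<lambda>_. R) m x \<le> B^N * Fw (\<lambda>_. R) x" if "m < N" for m
  proof -
    have "Wdev b (\<lambda>_. R) m x \<le> B^(length x - m) * Fw (\<lambda>_. R) x"
      using Wdev_bound[OF b(1) R(2) R(1)] sx unfolding B_def by blast
    also have "\<dots> \<le> B^N * Fw (\<lambda>_. R) x"
      using B1 lx Fw_const_ge1[OF R(1), of x] by (intro mult_right_mono power_increasing) auto
    finally show ?thesis .
  qed
  have "(\<Sum>m<N. phi b R * Fw (\<lambda>_. R) x + Wdev b (\<lambda>_. R) m x) \<le> (\<Sum>m<N. (phi b R + B^N) * Fw (\<lambda>_. R) x)"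
    using Wb by (intro sum_mono) (auto simp: algebra_simps)
  also have "\<dots> = real N * ((phi b R + B^N) * Fw (\<lambda>_. R) x)" by simp
  finally show "(\<Sum>m<N. phi b R * Fw (\<lambda>_. R) x + Wdev b (\<lambda>_. R) m x) / real N
          \<le> (phi b R + (R * (1 + Gf b R R))^N) * Fw (\<lambda>_. R) x"
    unfolding B_def[symmetric] using N by (simp add: divide_le_eq mult_ac)
qed


lemma jk_nonneg: "0 \<le> b \<Longrightarrow> b \<le> 1 \<Longrightarrow> jump_kernel b N x y \<ge> 0"
  unfolding jump_kernel_def by (intro divide_nonneg_nonneg sum_nonneg push_move_nonneg) auto

lemma kp_nonneg: "0 \<le> b \<Longrightarrow> b \<le> 1 \<Longrightarrow> jump_kernel_pow b N n x y \<ge> 0"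
  by (induction n arbitrary: y) (auto intro!: infsum_nonneg mult_nonneg_nonneg jk_nonneg)

lemma has_sum_delta:
  assumes "x \<in> A"
  shows "((\<lambda>y. (if x = y then 1 else 0) * g y) has_sum (g x :: 'b::{comm_ring_1,topological_space})) A"
proof -
  have "((\<lambda>y. (if x = y then 1 else 0) * g y) has_sum g x) {x}" by (rule has_sum_finiteI) simp_all
  then show ?thesis by (subst (asm) has_sum_cong_neutral[where T=A]) (use assms in auto)
qed

definition Cst :: "real \<Rightarrow> nat \<Rightarrow> real \<Rightarrow> real" where
  "Cst b N R = phi b R + (R * (1 + Gf b R R))^N"

definition Vk :: "real \<Rightarrow> nat \<Rightarrow> real \<Rightarrow> nat list \<Rightarrow> real" where
  "Vk b N R x = (\<Sum>m<N. phi b R * Fw (\<lambda>_. R) x + Wdev b (\<lambda>_. R) m x) / real N"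

context
  fixes b :: real and N :: nat and R :: real
  assumes b0: "0 \<le> b" and b1: "b < 1" and R1: "R \<ge> 1" and bR: "b * R < 1" and Npos: "N > 0"
begin

lemma kb1: "x \<in> XN N \<Longrightarrow> ((\<lambda>y. jump_kernel b N x y * Fw (\<lambda>_. R) y) has_sum Vk b N R x) (XN N)"
  unfolding Vk_def by (rule kbound(1)[OF b0 b1 R1 bR Npos])

lemma kb2: "x \<in> XN N \<Longrightarrow> Vk b N R x \<le> Cst b N R * Fw (\<lambda>_. R) x"
  unfolding Vk_def Cst_def by (rule kbound(2)[OF b0 b1 R1 bR Npos])

lemma H_pos: "Fw (\<lambda>_. R) y > 0" using Fw_const_ge1[OF R1, of y] by simp

lemma Vk_nonneg: "x \<in> XN N \<Longrightarrow> Vk b N R x \<ge> 0"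
  using kb1 by (rule has_sum_nonneg) (use H_pos[THEN less_imp_le] jk_nonneg b0 b1 in \<open>auto intro!: mult_nonneg_nonneg\<close>)

lemma SS:
  assumes x: "x \<in> XN N" and sm: "(\<lambda>ws. jump_kernel_pow b N n x ws * Fw (\<lambda>_. R) ws) summable_on XN N"
  shows "(\<lambda>(ws,y). jump_kernel_pow b N n x ws * (jump_kernel b N ws y * Fw (\<lambda>_. R) y)) summable_on (XN N \<times> XN N)"
    and "(\<lambda>ws. jump_kernel_pow b N n x ws * Vk b N R ws) summable_on XN N"
    and "infsum (\<lambda>(ws,y). jump_kernel_pow b N n x ws * (jump_kernel b N ws y * Fw (\<lambda>_. R) y)) (XN N \<times> XN N)
         = infsum (\<lambda>ws. jump_kernel_pow b N n x ws * Vk b N R ws) (XN N)"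
proof -
  have b1': "b \<le> 1" using b1 by simp
  have g: "(\<lambda>ws. jump_kernel_pow b N n x ws * Vk b N R ws) summable_on XN N"
  proof (rule summable_on_comparison_test)
    show "(\<lambda>ws. Cst b N R * (jump_kernel_pow b N n x ws * Fw (\<lambda>_. R) ws)) summable_on XN N"
      by (rule summable_on_cmult_right[OF sm])
    fix ws assume ws: "ws \<in> XN N"
    show "0 \<le> jump_kernel_pow b N n x ws * Vk b N R ws"
      using kp_nonneg[OF b0 b1'] Vk_nonneg[OF ws] by simp
    show "jump_kernel_pow b N n x ws * Vk b N R ws \<le> Cst b N R * (jump_kernel_pow b N n x ws * Fw (\<lambda>_. R) ws)"
      using mult_left_mono[OF kb2[OF ws] kp_nonneg[OF b0 b1', of N n x ws]] by (simp add: mult_ac)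
  qed
  show "(\<lambda>ws. jump_kernel_pow b N n x ws * Vk b N R ws) summable_on XN N" by (rule g)
  have row: "((\<lambda>y. jump_kernel_pow b N n x ws * (jump_kernel b N ws y * Fw (\<lambda>_. R) y)) has_sum
      (jump_kernel_pow b N n x ws * Vk b N R ws)) (XN N)" if "ws \<in> XN N" for ws
    by (rule has_sum_cmult_right[OF kb1[OF that]])
  have S: "(\<lambda>(ws,y). jump_kernel_pow b N n x ws * (jump_kernel b N ws y * Fw (\<lambda>_. R) y)) summable_on Sigma (XN N) (\<lambda>_. XN N)"
    by (rule summable_on_SigmaI[where g="\<lambda>ws. jump_kernel_pow b N n x ws * Vk b N R ws"])
       (use row g kp_nonneg[OF b0 b1'] jk_nonneg[OF b0 b1'] H_pos[THEN less_imp_le] in \<open>auto intro!: mult_nonneg_nonneg\<close>)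
  then show "(\<lambda>(ws,y). jump_kernel_pow b N n x ws * (jump_kernel b N ws y * Fw (\<lambda>_. R) y)) summable_on (XN N \<times> XN N)" by simp
  show "infsum (\<lambda>(ws,y). jump_kernel_pow b N n x ws * (jump_kernel b N ws y * Fw (\<lambda>_. R) y)) (XN N \<times> XN N)
         = infsum (\<lambda>ws. jump_kernel_pow b N n x ws * Vk b N R ws) (XN N)"
  proof -
    have "infsum (\<lambda>ws. infsum (\<lambda>y. jump_kernel_pow b N n x ws * (jump_kernel b N ws y * Fw (\<lambda>_. R) y)) (XN N)) (XN N)
      = infsum (\<lambda>ws. jump_kernel_pow b N n x ws * Vk b N R ws) (XN N)"
      by (intro infsum_cong infsumI row)
    then show ?thesis using infsum_Sigma_banach[OF S] by simp
  qed
qed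


lemma col:
  assumes x: "x \<in> XN N" and y: "y \<in> XN N" and sm: "(\<lambda>ws. jump_kernel_pow b N n x ws * Fw (\<lambda>_. R) ws) summable_on XN N"
  shows "((\<lambda>ws. jump_kernel_pow b N n x ws * jump_kernel b N ws y) has_sum jump_kernel_pow b N (Suc n) x y) (XN N)"
proof -
  have S2: "(\<lambda>(y,ws). jump_kernel_pow b N n x ws * (jump_kernel b N ws y * Fw (\<lambda>_. R) y)) summable_on (XN N \<times> XN N)"
    using SS(1)[OF x sm] by (subst (asm) summable_on_swap) (simp add: case_prod_unfold)
  have "(\<lambda>ws. jump_kernel_pow b N n x ws * (jump_kernel b N ws y * Fw (\<lambda>_. R) y)) summable_on XN N"
    using summable_on_SigmaD1[OF S2[unfolded Sigma_def[symmetric]] y] by simp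
  then have "(\<lambda>ws. (jump_kernel_pow b N n x ws * jump_kernel b N ws y) * Fw (\<lambda>_. R) y) summable_on XN N"
    by (simp add: mult_ac)
  then have "(\<lambda>ws. jump_kernel_pow b N n x ws * jump_kernel b N ws y) summable_on XN N"
    using summable_on_cmult_left'[of "Fw (\<lambda>_. R) y" "\<lambda>ws. jump_kernel_pow b N n x ws * jump_kernel b N ws y" "XN N"] H_pos[of y] by simp
  then show ?thesis by (simp add: has_sum_iff)
qed

lemma P3b:
  "x \<in> XN N \<Longrightarrow> (\<lambda>y. jump_kernel_pow b N n x y * Fw (\<lambda>_. R) y) summable_on XN N \<and>
     infsum (\<lambda>y. jump_kernel_pow b N n x y * Fw (\<lambda>_. R) y) (XN N) \<le> Cst b N R ^ n * Fw (\<lambda>_. R) x"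
proof (induction n)
  case 0
  have "((\<lambda>y. jump_kernel_pow b N 0 x y * Fw (\<lambda>_. R) y) has_sum Fw (\<lambda>_. R) x) (XN N)"
    using has_sum_delta[OF "0.prems", of "Fw (\<lambda>_. R)"] by simp
  then show ?case by (simp add: has_sum_iff)
next
  case (Suc n)
  note x = Suc.prems
  have sm: "(\<lambda>ws. jump_kernel_pow b N n x ws * Fw (\<lambda>_. R) ws) summable_on XN N"
    and le: "infsum (\<lambda>y. jump_kernel_pow b N n x y * Fw (\<lambda>_. R) y) (XN N) \<le> Cst b N R ^ n * Fw (\<lambda>_. R) x"
    using Suc.IH[OF x] by auto
  have b1': "b \<le> 1" using b1 by simp
  have C0: "Cst b N R \<ge> 0"
  proof -
    have "0 \<le> Cst b N R * Fw (\<lambda>_. R) x" using Vk_nonneg[OF x] kb2[OF x] by linarith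
    then show ?thesis using H_pos[of x] by (simp add: zero_le_mult_iff)
  qed
  have S: "(\<lambda>(ws,y). jump_kernel_pow b N n x ws * (jump_kernel b N ws y * Fw (\<lambda>_. R) y)) summable_on (XN N \<times> XN N)"
    by (rule SS(1)[OF x sm])
  have S2: "(\<lambda>(y,ws). jump_kernel_pow b N n x ws * (jump_kernel b N ws y * Fw (\<lambda>_. R) y)) summable_on (XN N \<times> XN N)"
    using S by (subst (asm) summable_on_swap) (simp add: case_prod_unfold)
  have colv: "infsum (\<lambda>ws. jump_kernel_pow b N n x ws * (jump_kernel b N ws y * Fw (\<lambda>_. R) y)) (XN N)
      = jump_kernel_pow b N (Suc n) x y * Fw (\<lambda>_. R) y" if y: "y \<in> XN N" for y
  proof -
    have "infsum (\<lambda>ws. jump_kernel_pow b N n x ws * (jump_kernel b N ws y * Fw (\<lambda>_. R) y)) (XN N)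
        = infsum (\<lambda>ws. (jump_kernel_pow b N n x ws * jump_kernel b N ws y) * Fw (\<lambda>_. R) y) (XN N)"
      by (simp add: mult_ac)
    also have "\<dots> = infsum (\<lambda>ws. jump_kernel_pow b N n x ws * jump_kernel b N ws y) (XN N) * Fw (\<lambda>_. R) y"
      by (rule infsum_cmult_left')
    finally show ?thesis by simp
  qed
  have colS: "(\<lambda>ws. jump_kernel_pow b N n x ws * (jump_kernel b N ws y * Fw (\<lambda>_. R) y)) summable_on XN N"
    if y: "y \<in> XN N" for y
    using summable_on_SigmaD1[OF S2[unfolded Sigma_def[symmetric]] y] by simp
  have "(\<lambda>y. infsum (\<lambda>ws. jump_kernel_pow b N n x ws * (jump_kernel b N ws y * Fw (\<lambda>_. R) y)) (XN N)) summable_on XN N"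
    using summable_on_SigmaD[OF S2[unfolded Sigma_def[symmetric]]] colS by (simp add: case_prod_unfold)
  then have sm2: "(\<lambda>y. jump_kernel_pow b N (Suc n) x y * Fw (\<lambda>_. R) y) summable_on XN N"
    by (rule summable_on_cong[THEN iffD1, rotated]) (simp add: colv)
  have "infsum (\<lambda>y. jump_kernel_pow b N (Suc n) x y * Fw (\<lambda>_. R) y) (XN N)
     = infsum (\<lambda>y. infsum (\<lambda>ws. jump_kernel_pow b N n x ws * (jump_kernel b N ws y * Fw (\<lambda>_. R) y)) (XN N)) (XN N)"
    by (intro infsum_cong) (simp add: colv)
  also have "\<dots> = infsum (\<lambda>ws. infsum (\<lambda>y. jump_kernel_pow b N n x ws * (jump_kernel b N ws y * Fw (\<lambda>_. R) y)) (XN N)) (XN N)"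
    by (rule infsum_swap_banach[symmetric]) (use S in simp)
  also have "\<dots> = infsum (\<lambda>(ws,y). jump_kernel_pow b N n x ws * (jump_kernel b N ws y * Fw (\<lambda>_. R) y)) (XN N \<times> XN N)"
    using infsum_Sigma_banach[of "\<lambda>(ws,y). jump_kernel_pow b N n x ws * (jump_kernel b N ws y * Fw (\<lambda>_. R) y)" "XN N" "\<lambda>_. XN N"] S
    by simp
  also have "\<dots> = infsum (\<lambda>ws. jump_kernel_pow b N n x ws * Vk b N R ws) (XN N)" by (rule SS(3)[OF x sm])
  also have "\<dots> \<le> infsum (\<lambda>ws. Cst b N R * (jump_kernel_pow b N n x ws * Fw (\<lambda>_. R) ws)) (XN N)"
  proof (rule infsum_mono)
    show "(\<lambda>ws. jump_kernel_pow b N n x ws * Vk b N R ws) summable_on XN N" by (rule SS(2)[OF x sm])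
    show "(\<lambda>ws. Cst b N R * (jump_kernel_pow b N n x ws * Fw (\<lambda>_. R) ws)) summable_on XN N"
      by (rule summable_on_cmult_right[OF sm])
    fix ws assume ws: "ws \<in> XN N"
    show "jump_kernel_pow b N n x ws * Vk b N R ws \<le> Cst b N R * (jump_kernel_pow b N n x ws * Fw (\<lambda>_. R) ws)"
      using mult_left_mono[OF kb2[OF ws] kp_nonneg[OF b0 b1', of N n x ws]] by (simp add: mult_ac)
  qed
  also have "\<dots> = Cst b N R * infsum (\<lambda>ws. jump_kernel_pow b N n x ws * Fw (\<lambda>_. R) ws) (XN N)"
    by (rule infsum_cmult_right')
  also have "\<dots> \<le> Cst b N R * (Cst b N R ^ n * Fw (\<lambda>_. R) x)" by (rule mult_left_mono[OF le C0])
  finally show ?case using sm2 by (simp add: mult_ac)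
qed


lemma Phi_bound:
  fixes z :: "nat \<Rightarrow> complex"
  assumes zR: "\<forall>i<N. cmod (z i) \<le> R" and y: "length y = N"
  shows "cmod (Phi b N y z) \<le> (\<Sum>\<sigma>\<in>{\<sigma>. \<sigma> permutes {..<N}}. cmod (A_coef b N z \<sigma>)) * Fw (\<lambda>_. R) y"
proof -
  have Fb: "cmod (Fw (z \<circ> \<sigma>) y) \<le> Fw (\<lambda>_. R) y" if s: "\<sigma> permutes {..<N}" for \<sigma>
  proof -
    have "cmod (Fw (z \<circ> \<sigma>) y) = (\<Prod>i<length y. cmod (z (\<sigma> i)) ^ (y!i))"
      unfolding Fw_def by (simp add: prod_norm[symmetric] norm_power)
    also have "\<dots> \<le> (\<Prod>i<length y. R ^ (y!i))"
    proof (intro prod_mono conjI)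
      fix i assume "i \<in> {..<length y}"
      then have "\<sigma> i < N" using permutes_in_image[OF s] y by auto
      then show "cmod (z (\<sigma> i)) ^ (y!i) \<le> R ^ (y!i)" using zR by (intro power_mono) auto
    qed simp
    finally show ?thesis unfolding Fw_def by simp
  qed
  have "cmod (Phi b N y z) \<le> (\<Sum>\<sigma>\<in>{\<sigma>. \<sigma> permutes {..<N}}. cmod (A_coef b N z \<sigma> * Fw (z \<circ> \<sigma>) y))"
    unfolding Phi_Fw[OF y] by (rule norm_sum)
  also have "\<dots> \<le> (\<Sum>\<sigma>\<in>{\<sigma>. \<sigma> permutes {..<N}}. cmod (A_coef b N z \<sigma>) * Fw (\<lambda>_. R) y)"
    by (intro sum_mono) (simp add: norm_mult Fb mult_left_mono)
  finally show ?thesis by (simp add: sum_distrib_right)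
qed

lemma P3c:
  fixes z :: "nat \<Rightarrow> complex"
  assumes zR: "\<forall>i<N. cmod (z i) \<le> R"
  shows "x \<in> XN N \<Longrightarrow> ((\<lambda>y. of_real (jump_kernel_pow b N n x y) * Phi b N y z) has_sum
           (((\<Sum>m<N. phi b (z m)) / of_nat N) ^ n * Phi b N x z)) (XN N)"
proof (induction n)
  case 0
  show ?case using has_sum_delta[OF "0.prems", of "\<lambda>y. Phi b N y z"] by (simp add: if_distrib cong: if_cong)
next
  case (Suc n)
  note x = Suc.prems
  define lam where "lam = (\<Sum>m<N. phi b (z m)) / of_nat N"
  define M where "M = (\<Sum>\<sigma>\<in>{\<sigma>. \<sigma> permutes {..<N}}. cmod (A_coef b N z \<sigma>))"
  have b1': "b \<le> 1" using b1 by simp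
  have nz: "\<forall>i<N. cmod (of_real b * z i) < 1"
  proof (intro allI impI)
    fix i assume "i < N"
    then have "b * cmod (z i) \<le> b * R" using zR b0 by (intro mult_left_mono) auto
    then show "cmod (of_real b * z i) < 1" using bR b0 by (simp add: norm_mult)
  qed
  have sm: "(\<lambda>ws. jump_kernel_pow b N n x ws * Fw (\<lambda>_. R) ws) summable_on XN N" using P3b[OF x] by auto
  have S: "(\<lambda>(ws,y). jump_kernel_pow b N n x ws * (jump_kernel b N ws y * Fw (\<lambda>_. R) y)) summable_on (XN N \<times> XN N)"
    by (rule SS(1)[OF x sm])
  define fc where "fc p = of_real (jump_kernel_pow b N n x (fst p) * jump_kernel b N (fst p) (snd p)) * Phi b N (snd p) z" for p
  have Sc: "fc summable_on (XN N \<times> XN N)"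
  proof -
    have "(\<lambda>p. norm (fc p)) summable_on (XN N \<times> XN N)"
    proof (rule Infinite_Sum.abs_summable_on_comparison_test')
      show "(\<lambda>p. M * (case p of (ws,y) \<Rightarrow> jump_kernel_pow b N n x ws * (jump_kernel b N ws y * Fw (\<lambda>_. R) y))) summable_on (XN N \<times> XN N)"
        by (rule summable_on_cmult_right[OF S])
      fix p assume p: "p \<in> XN N \<times> XN N"
      obtain ws y where pe: "p = (ws, y)" by fastforce
      have ly: "length y = N" using p pe XN_sorted by auto
      have "norm (fc p) = jump_kernel_pow b N n x ws * jump_kernel b N ws y * cmod (Phi b N y z)"
        unfolding fc_def pe using kp_nonneg[OF b0 b1'] jk_nonneg[OF b0 b1'] by (simp add: norm_mult)
      also have "\<dots> \<le> jump_kernel_pow b N n x ws * jump_kernel b N ws y * (M * Fw (\<lambda>_. R) y)"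
        using Phi_bound[OF zR ly] kp_nonneg[OF b0 b1'] jk_nonneg[OF b0 b1'] unfolding M_def
        by (intro mult_left_mono) auto
      finally show "norm (fc p) \<le> M * (case p of (ws,y) \<Rightarrow> jump_kernel_pow b N n x ws * (jump_kernel b N ws y * Fw (\<lambda>_. R) y))"
        unfolding pe by (simp add: mult_ac)
    qed
    then show ?thesis by (simp add: summable_on_iff_abs_summable_on_complex)
  qed
  then obtain T where T: "(fc has_sum T) (XN N \<times> XN N)" by (auto simp: summable_on_def)
  have row: "((\<lambda>y. fc (ws, y)) has_sum of_real (jump_kernel_pow b N n x ws) * (lam * Phi b N ws z)) (XN N)"
    if ws: "ws \<in> XN N" for ws
    using has_sum_cmult_right[OF eigen[OF b0 b1 nz ws], of "of_real (jump_kernel_pow b N n x ws)"]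
    unfolding fc_def lam_def by (simp add: mult_ac)
  have T1: "((\<lambda>ws. of_real (jump_kernel_pow b N n x ws) * (lam * Phi b N ws z)) has_sum T) (XN N)"
    by (rule has_sum_SigmaD[OF T[unfolded Sigma_def[symmetric]] row])
  have T2: "((\<lambda>ws. of_real (jump_kernel_pow b N n x ws) * (lam * Phi b N ws z)) has_sum (lam * (lam ^ n * Phi b N x z))) (XN N)"
    using has_sum_cmult_right[OF Suc.IH[OF x], of lam] unfolding lam_def by (simp add: mult_ac)
  have TT: "T = lam ^ Suc n * Phi b N x z" using has_sum_unique[OF T1 T2] by simp
  have Tsw: "((\<lambda>(y,ws). fc (ws, y)) has_sum T) (XN N \<times> XN N)" using T by (subst (asm) has_sum_swap) simp
  have colc: "((\<lambda>ws. fc (ws, y)) has_sum of_real (jump_kernel_pow b N (Suc n) x y) * Phi b N y z) (XN N)"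
    if y: "y \<in> XN N" for y
  proof -
    have "((\<lambda>ws. complex_of_real (jump_kernel_pow b N n x ws * jump_kernel b N ws y)) has_sum of_real (jump_kernel_pow b N (Suc n) x y)) (XN N)"
      using col[OF x y sm] has_sum_of_real_iff[where 'a=complex and f="\<lambda>ws. jump_kernel_pow b N n x ws * jump_kernel b N ws y" and c="jump_kernel_pow b N (Suc n) x y" and A="XN N"]
      by (simp only:)
    from has_sum_cmult_left[OF this, of "Phi b N y z"] show ?thesis unfolding fc_def by simp
  qed
  have "((\<lambda>y. of_real (jump_kernel_pow b N (Suc n) x y) * Phi b N y z) has_sum T) (XN N)"
    by (rule has_sum_SigmaD[OF Tsw[unfolded Sigma_def[symmetric]]]) (use colc in simp)
  then show ?case unfolding TT lam_def .
qed


lemma final: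
  fixes z :: "nat \<Rightarrow> complex"
  assumes zR: "\<forall>i<N. cmod (z i) \<le> R" and x: "x \<in> XN N" and t: "t \<ge> 0"
  shows "((\<lambda>y. of_real (trans_prob b N t x y) * Phi b N y z) has_sum
           (exp (of_real (real N * t) * ((\<Sum>m<N. phi b (z m)) / of_nat N - 1)) * Phi b N x z)) (XN N)"
proof -
  define lam where "lam = (\<Sum>m<N. phi b (z m)) / of_nat N"
  define M where "M = (\<Sum>\<sigma>\<in>{\<sigma>. \<sigma> permutes {..<N}}. cmod (A_coef b N z \<sigma>))"
  define p where "p n = exp (- real N * t) * (real N * t) ^ n / fact n" for n
  define H where "H = Fw (\<lambda>_. R)"
  define C where "C = Cst b N R"
  have b1': "b \<le> 1" using b1 by simp
  have p0: "p n \<ge> 0" for n unfolding p_def using t by simp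
  have C0: "C \<ge> 0"
  proof -
    have "0 \<le> Cst b N R * Fw (\<lambda>_. R) x" using Vk_nonneg[OF x] kb2[OF x] by linarith
    then show ?thesis using H_pos[of x] unfolding C_def by (simp add: zero_le_mult_iff)
  qed
  define I where "I n = infsum (\<lambda>y. jump_kernel_pow b N n x y * H y) (XN N)" for n
  have rowr: "((\<lambda>y. p n * (jump_kernel_pow b N n x y * H y)) has_sum p n * I n) (XN N)" for n
    using P3b[OF x, of n] unfolding I_def H_def by (intro has_sum_cmult_right) (simp add: has_sum_iff)
  have In: "I n \<le> C ^ n * H x" "I n \<ge> 0" for n
    using P3b[OF x, of n] unfolding I_def H_def C_def
    by (auto intro!: infsum_nonneg mult_nonneg_nonneg kp_nonneg[OF b0 b1'] H_pos[THEN less_imp_le])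
  have gs: "(\<lambda>n. p n * I n) summable_on UNIV"
  proof (rule summable_on_comparison_test)
    have "summable (\<lambda>n. exp (- real N * t) * H x * (inverse (fact n) * (real N * t * C) ^ n))"
      by (intro summable_mult summable_exp)
    then show "(\<lambda>n. exp (- real N * t) * H x * (inverse (fact n) * (real N * t * C) ^ n)) summable_on UNIV"
      by (rule summable_nonneg_imp_summable_on) (use t C0 H_pos[of x] in \<open>auto simp: H_def\<close>)
    fix n :: nat
    show "0 \<le> p n * I n" using p0 In by simp
    have "p n * I n \<le> p n * (C ^ n * H x)" using In p0 by (intro mult_left_mono) auto
    also have "\<dots> = exp (- real N * t) * H x * (inverse (fact n) * (real N * t * C) ^ n)"
      unfolding p_def by (simp add: power_mult_distrib divide_inverse mult_ac)
    finally show "p n * I n \<le> exp (- real N * t) * H x * (inverse (fact n) * (real N * t * C) ^ n)" .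
  qed
  have S: "(\<lambda>(n,y). p n * (jump_kernel_pow b N n x y * H y)) summable_on Sigma (UNIV::nat set) (\<lambda>_. XN N)"
    by (rule summable_on_SigmaI[where g="\<lambda>n. p n * I n"])
       (use rowr gs p0 kp_nonneg[OF b0 b1'] H_pos[THEN less_imp_le] in \<open>auto intro!: mult_nonneg_nonneg simp: H_def\<close>)
  define fc where "fc q = of_real (p (fst q) * jump_kernel_pow b N (fst q) x (snd q)) * Phi b N (snd q) z" for q
  have Sc: "fc summable_on ((UNIV::nat set) \<times> XN N)"
  proof -
    have "(\<lambda>q. norm (fc q)) summable_on ((UNIV::nat set) \<times> XN N)"
    proof (rule Infinite_Sum.abs_summable_on_comparison_test')
      show "(\<lambda>q. M * (case q of (n,y) \<Rightarrow> p n * (jump_kernel_pow b N n x y * H y))) summable_on ((UNIV::nat set) \<times> XN N)"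
        using summable_on_cmult_right[OF S] by simp
      fix q assume q: "q \<in> (UNIV::nat set) \<times> XN N"
      obtain n y where qe: "q = (n, y)" by fastforce
      have ly: "length y = N" using q qe XN_sorted by auto
      have "norm (fc q) = p n * jump_kernel_pow b N n x y * cmod (Phi b N y z)"
        unfolding fc_def qe using kp_nonneg[OF b0 b1'] p0 by (simp add: norm_mult)
      also have "\<dots> \<le> p n * jump_kernel_pow b N n x y * (M * H y)"
        using Phi_bound[OF zR ly] kp_nonneg[OF b0 b1'] p0 unfolding M_def H_def
        by (intro mult_left_mono) auto
      finally show "norm (fc q) \<le> M * (case q of (n,y) \<Rightarrow> p n * (jump_kernel_pow b N n x y * H y))"
        unfolding qe by (simp add: mult_ac)
    qed
    then show ?thesis by (simp add: summable_on_iff_abs_summable_on_complex)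
  qed
  then obtain T where T: "(fc has_sum T) ((UNIV::nat set) \<times> XN N)" by (auto simp: summable_on_def)
  have rowc: "((\<lambda>y. fc (n, y)) has_sum of_real (p n) * (lam ^ n * Phi b N x z)) (XN N)" for n
    using has_sum_cmult_right[OF P3c[OF zR x, of n], of "of_real (p n)"]
    unfolding fc_def lam_def by (simp add: mult_ac)
  have T1: "((\<lambda>n. of_real (p n) * (lam ^ n * Phi b N x z)) has_sum T) UNIV"
    by (rule has_sum_SigmaD[OF T[unfolded Sigma_def[symmetric]] rowc])
  define w where "w = of_real (real N * t) * lam"
  have ex: "((\<lambda>n. w ^ n /\<^sub>R fact n) has_sum exp w) UNIV"
  proof (rule norm_summable_imp_has_sum[OF _ exp_converges])
    show "summable (\<lambda>n. norm (w ^ n /\<^sub>R fact n))"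
      using summable_exp[of "norm w"] by (simp add: norm_power divide_inverse mult_ac)
  qed
  have T2: "((\<lambda>n. of_real (p n) * (lam ^ n * Phi b N x z)) has_sum
      (of_real (exp (- real N * t)) * Phi b N x z * exp w)) UNIV"
  proof -
    have "((\<lambda>n. of_real (exp (- real N * t)) * Phi b N x z * (w ^ n /\<^sub>R fact n)) has_sum
      (of_real (exp (- real N * t)) * Phi b N x z * exp w)) UNIV" by (rule has_sum_cmult_right[OF ex])
    moreover have "of_real (exp (- real N * t)) * Phi b N x z * (w ^ n /\<^sub>R fact n) = of_real (p n) * (lam ^ n * Phi b N x z)" for n
      unfolding p_def w_def by (simp add: scaleR_conv_of_real power_mult_distrib divide_inverse mult_ac)
    ultimately show ?thesis by simp
  qed
  have TT: "T = exp (of_real (real N * t) * (lam - 1)) * Phi b N x z"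
  proof -
    have "T = of_real (exp (- real N * t)) * Phi b N x z * exp w" using has_sum_unique[OF T1 T2] .
    also have "of_real (exp (- real N * t)) = exp (of_real (- real N * t) :: complex)"
      by (rule exp_of_real[symmetric])
    also have "exp (of_real (- real N * t)) * Phi b N x z * exp w = exp (w + of_real (- real N * t)) * Phi b N x z"
      by (simp only: exp_add mult_ac)
    also have "w + of_real (- real N * t) = of_real (real N * t) * (lam - 1)" unfolding w_def by (simp add: algebra_simps)
    finally show ?thesis .
  qed
  have Tsw: "((\<lambda>(y,n). fc (n, y)) has_sum T) (XN N \<times> (UNIV::nat set))" using T by (subst (asm) has_sum_swap) simp
  have Ssw: "(\<lambda>(y,n). p n * (jump_kernel_pow b N n x y * H y)) summable_on (XN N \<times> (UNIV::nat set))"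
    using S by (subst (asm) summable_on_swap) (simp add: case_prod_unfold)
  have colc: "((\<lambda>n. fc (n, y)) has_sum of_real (trans_prob b N t x y) * Phi b N y z) UNIV"
    if y: "y \<in> XN N" for y
  proof -
    have "(\<lambda>n. p n * (jump_kernel_pow b N n x y * H y)) summable_on UNIV"
      using summable_on_SigmaD1[OF Ssw[unfolded Sigma_def[symmetric]] y] by simp
    then have "(\<lambda>n. (p n * jump_kernel_pow b N n x y) * H y) summable_on UNIV" by (simp add: mult_ac)
    then have "(\<lambda>n. p n * jump_kernel_pow b N n x y) summable_on UNIV"
      using summable_on_cmult_left'[of "H y" "\<lambda>n. p n * jump_kernel_pow b N n x y" UNIV] H_pos[of y] unfolding H_def by simp
    then have "((\<lambda>n. p n * jump_kernel_pow b N n x y) has_sum trans_prob b N t x y) UNIV"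
      unfolding trans_prob_def p_def by (simp add: has_sum_iff)
    then have "((\<lambda>n. complex_of_real (p n * jump_kernel_pow b N n x y)) has_sum of_real (trans_prob b N t x y)) UNIV"
      using has_sum_of_real_iff[where 'a=complex and f="\<lambda>n. p n * jump_kernel_pow b N n x y" and c="trans_prob b N t x y" and A=UNIV]
      by (simp only:)
    from has_sum_cmult_left[OF this, of "Phi b N y z"] show ?thesis unfolding fc_def by simp
  qed
  have "((\<lambda>y. of_real (trans_prob b N t x y) * Phi b N y z) has_sum T) (XN N)"
    by (rule has_sum_SigmaD[OF Tsw[unfolded Sigma_def[symmetric]]]) (use colc in simp)
  then show ?thesis unfolding TT lam_def .
qed

end


lemma one_minus_phi:
  fixes u :: complex
  assumes "1 - of_real b * u \<noteq> 0"
  shows "1 - phi b u = (1 - u) / (1 - of_real b * u)"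
  using assms unfolding phi_def psi_def by (simp add: field_simps)

theorem proposition3p1:
  fixes b :: real and N :: nat and z :: "nat \<Rightarrow> complex" and t :: real and xs :: "nat list"
  assumes "0 < b" and "b < 1" and "N > 0"
    and "\<And>i. i < N \<Longrightarrow> cmod (complex_of_real b * z i) < 1"
    and "\<And>i j. i < N \<Longrightarrow> j < N \<Longrightarrow> i \<noteq> j \<Longrightarrow> Afac b (z i) (z j) \<noteq> 0"
    and "t \<ge> 0" and "xs \<in> XN N"
  shows "((\<lambda>ys. complex_of_real (trans_prob b N t xs ys) * Phi b N ys z) has_sum
           (exp (- complex_of_real t * (\<Sum>i<N. (1 - z i) / (1 - complex_of_real b * z i)))
             * Phi b N xs z)) (XN N)"
proof -
  note b = assms(1,2) and Npos = assms(3) and nz = assms(4) and t = assms(6) and x = assms(7)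
  define R where "R = Max (insert 1 ((\<lambda>i. cmod (z i)) ` {..<N}))"
  have fin: "finite (insert 1 ((\<lambda>i. cmod (z i)) ` {..<N}))" by simp
  have R1: "R \<ge> 1" unfolding R_def by (rule Max_ge[OF fin]) simp
  have zR: "\<forall>i<N. cmod (z i) \<le> R" unfolding R_def using fin by (auto intro: Max_ge)
  have bR: "b * R < 1"
  proof -
    have "R \<in> insert 1 ((\<lambda>i. cmod (z i)) ` {..<N})" unfolding R_def by (rule Max_in[OF fin]) simp
    then show ?thesis
    proof
      assume "R = 1" then show ?thesis using b by simp
    next
      assume "R \<in> (\<lambda>i. cmod (z i)) ` {..<N}"
      then obtain i where "i < N" "R = cmod (z i)" by auto
      then show ?thesis using nz[of i] b by (simp add: norm_mult)
    qed
  qed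
  have F: "((\<lambda>y. of_real (trans_prob b N t xs y) * Phi b N y z) has_sum
           (exp (of_real (real N * t) * ((\<Sum>m<N. phi b (z m)) / of_nat N - 1)) * Phi b N xs z)) (XN N)"
    by (rule final[OF less_imp_le[OF b(1)] b(2) R1 bR Npos zR x t])
  have nz1: "1 - of_real b * z i \<noteq> 0" if "i < N" for i using nz[OF that] nz_of_norm by blast
  have "of_real (real N * t) * ((\<Sum>m<N. phi b (z m)) / of_nat N - 1)
      = - of_real t * (of_nat N - (\<Sum>m<N. phi b (z m)))"
    using Npos by (simp add: field_simps)
  also have "of_nat N - (\<Sum>m<N. phi b (z m)) = (\<Sum>m<N. 1 - phi b (z m))"
    by (simp add: sum_subtractf)
  also have "\<dots> = (\<Sum>i<N. (1 - z i) / (1 - complex_of_real b * z i))"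
    using one_minus_phi nz1 by (intro sum.cong refl) auto
  finally show ?thesis using F by simp
qed

end
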